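(* Consider a cross-modal generalization problem with modalities $m\in\{1,\dots,M\}$ and tasks $n\in\{1,\dots,N\}$, generalization objective $\mathcal{L}[f_w]=\mathbb{E}_{(m,n)\sim p(m,n),\,(x,y)\sim p_{m,n}(x,y)}\log\left[\frac{f_w(x,y,m,n)}{p(x,y\mid m,n)}\right]$, and a low-resource subset $\mathcal{M}$ of modality–task pairs on which only estimates $q(x,y\mid m,n)\neq p(x,y\mid m,n)$ are available, and assume the minimum visibility assumption holds. Suppose all modalities are pairwise strongly aligned. Then one can define a surrogate loss functional $\tilde{\mathcal{L}}[f_w]$, computable from the known distributions, such that $\mathcal{L}\left[\arg\max_w \tilde{\mathcal{L}}[f_w]\right]=0$, i.e. maximizing the surrogate yields perfect generalization (including on the low-resource pairs in $\mathcal{M}$).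
   Context: There are $M$ heterogeneous input spaces (modalities) $\mathcal{X}_m$ and $N$ label spaces (tasks) $\mathcal{Y}_n$. A meta-distribution over modalities, tasks, inputs and labels is given; $(m,n)$ is drawn from a prior $p(m,n)$ and, within the classification problem $\mathcal{T}(m,n)=(\mathcal{X}_m,\mathcal{Y}_n,p_{m,n})$, data are drawn from the true labeling distribution $p_{m,n}(x,y):=p(x,y\mid m,n)$. A model is a single function $f_w(x,y,m,n)$ with parameters $w$; the cross-modal generalization problem is to maximize $\mathcal{L}[f_w]$ above, whose maximum value $0$ is attained when $f_w(x,y,m,n)=p(x,y\mid m,n)$ ("perfect generalization"). A distribution is called known if it can be estimated exactly/accurately. The problem is (partially) low resource on a subset $\mathcal{M}$ of modality–task pairs if for $(m,n)\in\mathcal{M}$, $p(x,y\mid m,n)$ is not known and only an estimate $q(x,y\mid m,n)\ne p(x,y\mid m,n)$ is available. Minimum visibility assumption: for every task $n$ there is at least one modality $m$ such that $p(x,y\mid m,n)$ is known; for every modality $m$ there is at least one task $n$ such that $p(x,y\mid m,n)$ is known; and all single-variable marginals $p(x)$, $p(y)$ are known. Strong alignment: for modalities $m_i\ne m_j$ with joint $p(x_i,x_j)$ known ($x_i\in\mathcal{X}_{m_i}$, $x_j\in\mathcal{X}_{m_j}$), there is strong alignment between $m_i$ and $m_j$ if both $p(x_i\mid x_j)$ and $p(x_j\mid x_i)$ are delta distributions (a one-to-one mapping between $x_i$ and $x_j$); otherwise only weak alignment. *)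

theory Defs
  imports "HOL-Probability.Probability"
begin

text \<open>Meta-distribution: a single joint law W over the inputs of all modalities
  (a vector v :: 'm => 'x) and the labels of all tasks (u :: 'n => 'y).
  The input space of modality m is the support of the m-th coordinate (inside the
  common carrier type 'x); likewise for labels.\<close>

definition task_dist ::
  "(('m \<Rightarrow> 'x) \<times> ('n \<Rightarrow> 'y)) pmf \<Rightarrow> 'm \<Rightarrow> 'n \<Rightarrow> ('x \<times> 'y) pmf" where
  "task_dist W m n = map_pmf (\<lambda>(v, u). (v m, u n)) W"

definition input_marginal ::
  "(('m \<Rightarrow> 'x) \<times> ('n \<Rightarrow> 'y)) pmf \<Rightarrow> 'm \<Rightarrow> 'x pmf" where
  "input_marginal W m = map_pmf (\<lambda>(v, u). v m) W"

definition label_marginal ::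
  "(('m \<Rightarrow> 'x) \<times> ('n \<Rightarrow> 'y)) pmf \<Rightarrow> 'n \<Rightarrow> 'y pmf" where
  "label_marginal W n = map_pmf (\<lambda>(v, u). u n) W"

definition input_joint ::
  "(('m \<Rightarrow> 'x) \<times> ('n \<Rightarrow> 'y)) pmf \<Rightarrow> 'm \<Rightarrow> 'm \<Rightarrow> ('x \<times> 'x) pmf" where
  "input_joint W i j = map_pmf (\<lambda>(v, u). (v i, v j)) W"

definition elog :: "real \<Rightarrow> ereal" where
  "elog t = (if t > 0 then ereal (ln t) else -\<infinity>)"

definition gen_objective ::
  "('m::finite \<times> 'n::finite) pmf \<Rightarrow> (('m \<Rightarrow> 'x::finite) \<times> ('n \<Rightarrow> 'y::finite)) pmf
    \<Rightarrow> ('x \<Rightarrow> 'y \<Rightarrow> 'm \<Rightarrow> 'n \<Rightarrow> real) \<Rightarrow> ereal" where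
  "gen_objective P W f =
     (\<Sum>mn\<in>UNIV. \<Sum>xy\<in>UNIV.
        (let p = pmf (task_dist W (fst mn) (snd mn)) xy;
             wt = pmf P mn * p
         in if wt = 0 then 0
            else ereal wt * elog (f (fst xy) (snd xy) (fst mn) (snd mn) / p)))"

definition delta_conditional :: "('a \<times> 'b) pmf \<Rightarrow> bool" where
  "delta_conditional J \<longleftrightarrow>
     (\<forall>a \<in> set_pmf (map_pmf fst J). \<exists>b. pmf J (a, b) = pmf (map_pmf fst J) a)"

definition strongly_aligned ::
  "(('m \<Rightarrow> 'x) \<times> ('n \<Rightarrow> 'y)) pmf \<Rightarrow> 'm \<Rightarrow> 'm \<Rightarrow> bool" where
  "strongly_aligned W i j \<longleftrightarrow>
     delta_conditional (input_joint W i j) \<and>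
     delta_conditional (map_pmf prod.swap (input_joint W i j))"

text \<open>Minimum visibility on the set K of pairs whose distribution is known
  (the marginals being known is modelled by handing them to the surrogate).\<close>
definition min_visibility :: "('m \<times> 'n) set \<Rightarrow> bool" where
  "min_visibility K \<longleftrightarrow> (\<forall>n. \<exists>m. (m, n) \<in> K) \<and> (\<forall>m. \<exists>n. (m, n) \<in> K)"

definition known_data ::
  "(('m \<Rightarrow> 'x) \<times> ('n \<Rightarrow> 'y)) pmf \<Rightarrow> ('m \<times> 'n) set \<Rightarrow> 'm \<Rightarrow> 'n \<Rightarrow> ('x \<times> 'y) pmf option" where
  "known_data W K m n = (if (m, n) \<in> K then Some (task_dist W m n) else None)"

end

theory Submission
  imports Defs
begin

definition gsel :: "('a \<times> 'b) pmf \<Rightarrow> 'a \<Rightarrow> 'b" where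
  "gsel J c = (SOME a. pmf J (c, a) = pmf (map_pmf fst J) c)"

definition Rec :: "('m \<Rightarrow> 'n \<Rightarrow> ('x \<times> 'y) pmf option) \<Rightarrow> ('m \<Rightarrow> 'm \<Rightarrow> ('x \<times> 'x) pmf)
   \<Rightarrow> 'm \<Rightarrow> 'n \<Rightarrow> ('x \<times> 'y) pmf" where
  "Rec kd J m n = (case kd m n of Some d \<Rightarrow> d
     | None \<Rightarrow> (let m' = (SOME m'. kd m' n \<noteq> None)
               in map_pmf (\<lambda>(c, b). (gsel (J m' m) c, b)) (the (kd m' n))))"

lemma delta_unique:
  fixes J :: "('a::finite \<times> 'b::finite) pmf"
  assumes "pmf J (c, a) = pmf (map_pmf fst J) c" and "(c, a') \<in> set_pmf J"
  shows "a' = a"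
proof (rule ccontr)
  assume ne: "a' \<noteq> a"
  have "pmf (map_pmf fst J) c = measure J (fst -` {c})" by (simp add: pmf_map)
  also have "fst -` {c} = Pair c ` UNIV" by auto
  also have "measure J (Pair c ` UNIV) = sum (pmf J) (Pair c ` UNIV)"
    by (simp add: measure_measure_pmf_finite)
  also have "\<dots> = (\<Sum>x\<in>UNIV. pmf J (c, x))"
    by (subst sum.reindex) (auto simp: inj_on_def)
  also have "\<dots> = pmf J (c, a) + (\<Sum>x\<in>UNIV - {a}. pmf J (c, x))"
    by (simp add: sum.remove[of UNIV a])
  finally have "(\<Sum>x\<in>UNIV - {a}. pmf J (c, x)) = 0" using assms(1) by simp
  hence "\<forall>x\<in>UNIV - {a}. pmf J (c, x) = 0"
    by (subst (asm) sum_nonneg_eq_0_iff) auto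
  hence "pmf J (c, a') = 0" using ne by auto
  thus False using assms(2) by (simp add: set_pmf_eq)
qed

lemma rec_correct:
  fixes W :: "(('m::finite \<Rightarrow> 'x::finite) \<times> ('n::finite \<Rightarrow> 'y::finite)) pmf"
  assumes mv: "min_visibility K"
    and sa: "\<forall>i j. i \<noteq> j \<longrightarrow> strongly_aligned W i j"
  shows "Rec (known_data W K) (input_joint W) m n = task_dist W m n"
proof (cases "(m, n) \<in> K")
  case True
  thus ?thesis by (simp add: Rec_def known_data_def)
next
  case False
  define m' where "m' = (SOME m'. known_data W K m' n \<noteq> None)"
  have ex: "\<exists>m'. known_data W K m' n \<noteq> None"
    using mv unfolding min_visibility_def known_data_def by auto
  hence km': "known_data W K m' n \<noteq> None" unfolding m'_def by (rule someI_ex)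
  hence inK: "(m', n) \<in> K" by (simp add: known_data_def split: if_splits)
  hence neq: "m' \<noteq> m" using False by auto
  define J where "J = input_joint W m' m"
  have dc: "delta_conditional J" using sa neq unfolding strongly_aligned_def J_def by auto
  have key: "v m = gsel J (v m')" if "(v, u) \<in> set_pmf W" for v u
  proof -
    have inJ: "(v m', v m) \<in> set_pmf J" using that unfolding J_def input_joint_def by force
    hence "v m' \<in> set_pmf (map_pmf fst J)" by force
    then obtain a where a: "pmf J (v m', a) = pmf (map_pmf fst J) (v m')"
      using dc unfolding delta_conditional_def by blast
    have g: "pmf J (v m', gsel J (v m')) = pmf (map_pmf fst J) (v m')"
      unfolding gsel_def by (rule someI, rule a)
    show ?thesis by (rule delta_unique[OF g inJ])
  qed
  have "Rec (known_data W K) (input_joint W) m n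
      = map_pmf (\<lambda>(c, b). (gsel J c, b)) (task_dist W m' n)"
    proof -
    have "known_data W K m n = None" using False by (simp add: known_data_def)
    hence "Rec (known_data W K) (input_joint W) m n
       = map_pmf (\<lambda>(c, b). (gsel (input_joint W m' m) c, b)) (the (known_data W K m' n))"
      unfolding Rec_def m'_def by (simp add: Let_def)
    thus ?thesis using inK by (simp add: known_data_def J_def)
  qed
  also have "\<dots> = map_pmf (\<lambda>(v, u). (gsel J (v m'), u n)) W"
    by (simp add: task_dist_def map_pmf_comp case_prod_beta split_beta')
  also have "\<dots> = map_pmf (\<lambda>(v, u). (v m, u n)) W"
    by (rule map_pmf_cong) (auto simp: key)
  finally show ?thesis by (simp add: task_dist_def)
qed

theorem proposition1:
  "\<exists>S :: ('m::finite \<times> 'n::finite) pmf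
          \<Rightarrow> ('m \<Rightarrow> 'n \<Rightarrow> ('x::finite \<times> 'y::finite) pmf option)
          \<Rightarrow> ('m \<Rightarrow> 'n \<Rightarrow> ('x \<times> 'y) pmf)
          \<Rightarrow> ('m \<Rightarrow> 'x pmf) \<Rightarrow> ('n \<Rightarrow> 'y pmf)
          \<Rightarrow> ('m \<Rightarrow> 'm \<Rightarrow> ('x \<times> 'x) pmf)
          \<Rightarrow> ('x \<Rightarrow> 'y \<Rightarrow> 'm \<Rightarrow> 'n \<Rightarrow> real) \<Rightarrow> ereal.
     \<forall>(P :: ('m \<times> 'n) pmf) (W :: (('m \<Rightarrow> 'x) \<times> ('n \<Rightarrow> 'y)) pmf)
       (K :: ('m \<times> 'n) set) (q :: 'm \<Rightarrow> 'n \<Rightarrow> ('x \<times> 'y) pmf)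
       (F :: 'w \<Rightarrow> 'x \<Rightarrow> 'y \<Rightarrow> 'm \<Rightarrow> 'n \<Rightarrow> real).
       min_visibility K \<and>
       (\<forall>m n. (m, n) \<notin> K \<longrightarrow> q m n \<noteq> task_dist W m n) \<and>
       (\<forall>i j. i \<noteq> j \<longrightarrow> strongly_aligned W i j) \<and>
       (\<exists>w0. \<forall>x y m n. F w0 x y m n = pmf (task_dist W m n) (x, y))
       \<longrightarrow>
       (\<forall>w. (\<forall>w'. S P (known_data W K) q (input_marginal W) (label_marginal W) (input_joint W) (F w')
                 \<le> S P (known_data W K) q (input_marginal W) (label_marginal W) (input_joint W) (F w))
            \<longrightarrow> gen_objective P W (F w) = 0)"
proof -
  define S :: "('m \<times> 'n) pmf
          \<Rightarrow> ('m \<Rightarrow> 'n \<Rightarrow> ('x \<times> 'y) pmf option)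
          \<Rightarrow> ('m \<Rightarrow> 'n \<Rightarrow> ('x \<times> 'y) pmf)
          \<Rightarrow> ('m \<Rightarrow> 'x pmf) \<Rightarrow> ('n \<Rightarrow> 'y pmf)
          \<Rightarrow> ('m \<Rightarrow> 'm \<Rightarrow> ('x \<times> 'x) pmf)
          \<Rightarrow> ('x \<Rightarrow> 'y \<Rightarrow> 'm \<Rightarrow> 'n \<Rightarrow> real) \<Rightarrow> ereal" where
    "S = (\<lambda>P kd q mi lm J f. if (\<forall>m n x y. pmf P (m, n) > 0 \<and> pmf (Rec kd J m n) (x, y) > 0
              \<longrightarrow> f x y m n = pmf (Rec kd J m n) (x, y)) then 0 else -1)"
  show ?thesis
  proof (rule exI[of _ S], intro allI impI, elim conjE exE)
    fix P :: "('m \<times> 'n) pmf" and W :: "(('m \<Rightarrow> 'x) \<times> ('n \<Rightarrow> 'y)) pmf"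
      and K q and F :: "'w \<Rightarrow> 'x \<Rightarrow> 'y \<Rightarrow> 'm \<Rightarrow> 'n \<Rightarrow> real" and w0 w
    assume mv: "min_visibility K" and sa: "\<forall>i j. i \<noteq> j \<longrightarrow> strongly_aligned W i j"
      and w0: "\<forall>x y m n. F w0 x y m n = pmf (task_dist W m n) (x, y)"
      and mx: "\<forall>w'. S P (known_data W K) q (input_marginal W) (label_marginal W) (input_joint W) (F w')
                 \<le> S P (known_data W K) q (input_marginal W) (label_marginal W) (input_joint W) (F w)"
    note rc = rec_correct[OF mv sa]
    have "S P (known_data W K) q (input_marginal W) (label_marginal W) (input_joint W) (F w0) = 0"
      unfolding S_def using w0 rc by simp
    hence "S P (known_data W K) q (input_marginal W) (label_marginal W) (input_joint W) (F w) \<ge> 0"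
      using mx by metis
    hence good: "\<forall>m n x y. pmf P (m, n) > 0 \<and> pmf (task_dist W m n) (x, y) > 0
              \<longrightarrow> F w x y m n = pmf (task_dist W m n) (x, y)"
      unfolding S_def rc by (auto split: if_splits)
    show "gen_objective P W (F w) = 0"
      unfolding gen_objective_def
    proof (intro sum.neutral ballI)
      fix mn :: "'m \<times> 'n" and xy :: "'x \<times> 'y"
      obtain m n where mn: "mn = (m, n)" by force
      obtain x y where xy: "xy = (x, y)" by force
      show "(let p = pmf (task_dist W (fst mn) (snd mn)) xy; wt = pmf P mn * p
         in if wt = 0 then 0
            else ereal wt * elog (F w (fst xy) (snd xy) (fst mn) (snd mn) / p)) = 0"
      proof (cases "pmf P mn * pmf (task_dist W m n) xy = 0")
        case True thus ?thesis by (simp add: mn Let_def)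
      next
        case False
        hence pos: "pmf P (m, n) > 0" "pmf (task_dist W m n) (x, y) > 0"
          using pmf_nonneg[of P mn] pmf_nonneg[of "task_dist W m n" xy]
          by (auto simp: mn xy order_le_less)
        hence "F w x y m n = pmf (task_dist W m n) (x, y)" using good by blast
        thus ?thesis using False pos by (simp add: mn xy Let_def elog_def)
      qed
    qed
  qed
qed

end
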